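(* Let $R$ be a $*$-reducing ring and let $p,q\in R$ be projections. Then the following are equivalent: (1) $pq+qp$ is MP invertible; (2) $p+q$ and $pq$ are both MP invertible.
   Context: $R$ is an associative ring with identity $1$ and an involution $a\mapsto a^*$ (satisfying $(a^* )^*=a$, $(a+b)^*=a^*+b^*$, $(ab)^*=b^*a^*$). $R$ is $*$-reducing if $a^*a=0$ implies $a=0$ for all $a\in R$. An element $a$ is MP invertible if there is $b$ with $aba=a$, $bab=b$, $(ab)^*=ab$, $(ba)^*=ba$. A projection is an element $p$ with $p^2=p=p^*$. *)

theory Defs
  imports Main
begin

class star_ring = ring_1 +
  fixes star :: "'a \<Rightarrow> 'a"
  assumes star_star: "star (star a) = a"
    and star_add: "star (a + b) = star a + star b"
    and star_mult: "star (a * b) = star b * star a"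

definition star_reducing :: "('a::star_ring) itself \<Rightarrow> bool" where
  "star_reducing _ \<longleftrightarrow> (\<forall>a::'a. star a * a = 0 \<longrightarrow> a = 0)"

definition MP_invertible :: "'a::star_ring \<Rightarrow> bool" where
  "MP_invertible a \<longleftrightarrow> (\<exists>b. a * b * a = a \<and> b * a * b = b \<and>
      star (a * b) = a * b \<and> star (b * a) = b * a)"

definition projection :: "'a::star_ring \<Rightarrow> bool" where
  "projection p \<longleftrightarrow> p * p = p \<and> p = star p"

end

theory Submission
  imports Defs
begin

lemma star_zero: "star (0::'a::star_ring) = 0"
proof -
  have "star (0::'a) = star (0+0)" by simp
  also have "\<dots> = star 0 + star 0" by (rule star_add)
  finally show ?thesis by simp
qed

lemma star_one: "star (1::'a::star_ring) = 1"
proof -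
  have "star (star (1::'a) * 1) = star 1 * star (star 1)" by (rule star_mult)
  hence "star (star (1::'a)) = star 1 * 1" by (simp add: star_star)
  thus ?thesis by (simp add: star_star)
qed

lemma star_uminus: "star (- a) = - star (a::'a::star_ring)"
proof -
  have "star (a + - a) = star a + star (-a)" by (rule star_add)
  hence "0 = star a + star (-a)" by (simp add: star_zero)
  thus ?thesis by (simp add: eq_neg_iff_add_eq_0 add.commute)
qed

lemma star_diff: "star (a - b) = star a - star (b::'a::star_ring)"
  by (simp only: diff_conv_add_uminus star_add star_uminus)

lemmas star_simps = star_star star_add star_mult star_zero star_one star_uminus star_diff

definition C :: "'a::star_ring \<Rightarrow> bool" where
  "C a \<longleftrightarrow> (\<exists>x. a = a * a * x)"

lemma herm_GI:
  fixes a :: "'a::star_ring"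
  assumes h: "star a = a" and ax: "a = a * a * x"
  shows "\<exists>g. a * g = g * a \<and> a * g * a = a \<and> g * a * g = g \<and> star g = g \<and> star (a*g) = a*g"
proof -
  define y where "y = star x"
  have ya: "a = y * a * a"
  proof -
    have "star a = star (a * a * x)" using ax by simp
    thus ?thesis by (simp add: star_simps h y_def mult.assoc)
  qed
  have e: "a * x = y * a"
  proof -
    have "y * a = y * (a * a * x)" using ax by simp
    also have "\<dots> = (y * a * a) * x" by (simp add: mult.assoc)
    finally show ?thesis using ya by simp
  qed
  define g where "g = a * x * x"
  have g2: "g = y * y * a"
    by (simp add: g_def e mult.assoc[symmetric]) (simp add: mult.assoc e)
  have sg: "star g = g" using g2 by (simp add: g_def star_simps h y_def mult.assoc)
  have ag: "a * g = a * x" by (simp add: g_def mult.assoc[symmetric] ax[symmetric])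
  have ga: "g * a = a * x"
  proof -
    have "g * a = y * (y * a * a)" by (simp add: g2 mult.assoc)
    also have "\<dots> = y * a" using ya by simp
    finally show ?thesis using e by simp
  qed
  have aga: "a * g * a = a" using ag e ya by (simp add: mult.assoc[symmetric])
  have gag: "g * a * g = g"
  proof -
    have "g * a * g = (a * x) * (a * x * x)" by (simp only: ga) (simp only: g_def)
    also have "\<dots> = (a * x * a) * x * x" by (simp add: mult.assoc)
    also have "a * x * a = a" using aga ag by simp
    finally show ?thesis by (simp add: g_def)
  qed
  have sag: "star (a*g) = a*g" using ag e by (simp add: star_simps h y_def)
  show ?thesis using ag ga aga gag sg sag by metis
qed

lemma assoc_ext: "x * y = w \<Longrightarrow> x * (y * z) = w * (z::'a::star_ring)"
  by (simp add: mult.assoc[symmetric])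

lemma reduce0:
  fixes c :: "'a::star_ring"
  assumes "star_reducing TYPE('a)" and "c * star c = 0"
  shows "c = 0"
proof -
  have "star (star c) * star c = 0" using assms(2) by (simp add: star_star)
  hence "star c = 0" using assms(1) unfolding star_reducing_def by blast
  hence "star (star c) = 0" by (simp add: star_zero)
  thus ?thesis by (simp add: star_star)
qed

lemma herm_MP_iff:
  fixes a :: "'a::star_ring"
  assumes h: "star a = a"
  shows "MP_invertible a \<longleftrightarrow> C a"
proof
  assume "MP_invertible a"
  then obtain b where b: "a * b * a = a" "b * a * b = b" "star (a * b) = a * b" "star (b * a) = b * a"
    unfolding MP_invertible_def by blast
  have "b * a = a * star b" using b(4) h by (simp add: star_mult)
  hence "a = a * a * star b" using b(1) by (metis mult.assoc)
  thus "C a" unfolding C_def by blast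
next
  assume "C a"
  then obtain x where "a = a * a * x" unfolding C_def by blast
  from herm_GI[OF h this] obtain g where g: "a * g = g * a" "a * g * a = a" "g * a * g = g"
    "star g = g" "star (a*g) = a*g" by blast
  have "star (g * a) = g * a" using g(1) g(5) by simp
  thus "MP_invertible a" unfolding MP_invertible_def using g by blast
qed

lemma MP_imp_C:
  fixes a :: "'a::star_ring"
  assumes "MP_invertible a"
  shows "C (a * star a)"
proof -
  obtain b where b: "a * b * a = a" "b * a * b = b" "star (a * b) = a * b" "star (b * a) = b * a"
    using assms unfolding MP_invertible_def by blast
  have ba: "b * a = star a * star b" using b(4) by (simp add: star_mult)
  have a1: "a * star a * star b = a" using b(1) ba by (simp add: mult.assoc)
  have a2: "b * a * star a = star a"
  proof -
    have "star (a * star a * star b) = star a" using a1 by simp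
    thus ?thesis by (simp add: star_simps mult.assoc)
  qed
  have a3: "a * b * star b = star b"
  proof -
    have "star (b * a * b) = star b" using b(2) by simp
    hence "star b * star a * star b = star b" by (simp add: star_simps mult.assoc)
    thus ?thesis using b(3) by (simp add: star_mult)
  qed
  have a1': "a * (star a * (star b * z)) = a * z" for z using assoc_ext[of "a * star a" "star b" a z] a1
    by (simp add: mult.assoc)
  have a2': "b * (a * star a) = star a" using a2 by (simp add: mult.assoc)
  have a3': "a * (b * (star b * z)) = star b * z" for z using assoc_ext[of "a * b" "star b" "star b" z] a3
    by (simp add: mult.assoc)
  have a1'': "a * (star a * star b) = a" using a1 by (simp add: mult.assoc)
  have "(a * star a) * (a * star a) * (star b * b * star b * b * (a * star a)) = a * star a"
    by (simp add: mult.assoc a1' a2' a3' a1'')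
  thus ?thesis unfolding C_def by metis
qed

lemma C_imp_MP:
  fixes a :: "'a::star_ring"
  assumes red: "star_reducing TYPE('a)" and c: "C (a * star a)"
  shows "MP_invertible a"
proof -
  define h where "h = a * star a"
  have hh: "star h = h" by (simp add: h_def star_simps)
  obtain x where "h = h * h * x" using c unfolding C_def h_def by blast
  from herm_GI[OF hh this] obtain g where g: "h * g = g * h" "h * g * h = h" "g * h * g = g"
    "star g = g" "star (h*g) = h*g" by blast
  define e where "e = h * g"
  have se: "star e = e" using g(5) e_def by simp
  have eh: "(1 - e) * h = 0" using g(2) by (simp add: e_def algebra_simps)
  have "((1 - e) * a) * star ((1 - e) * a) = 0"
  proof -
    have "((1 - e) * a) * star ((1 - e) * a) = ((1 - e) * h) * (1 - e)"
      by (simp add: star_simps se h_def mult.assoc)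
    thus ?thesis using eh by simp
  qed
  hence "(1 - e) * a = 0" using reduce0[OF red] by blast
  hence ea: "e * a = a" by (simp add: algebra_simps)
  define b where "b = star a * g"
  have 1: "a * b * a = a" using ea by (simp add: b_def e_def h_def mult.assoc)
  have 2: "b * a * b = b"
  proof -
    have "b * a * b = star a * (g * h * g)" by (simp add: b_def h_def mult.assoc)
    thus ?thesis using g(3) b_def by simp
  qed
  have 3: "star (a * b) = a * b" using g(5) by (simp add: b_def h_def mult.assoc)
  have 4: "star (b * a) = b * a" using g(4) by (simp add: b_def star_simps mult.assoc)
  show ?thesis unfolding MP_invertible_def using 1 2 3 4 by blast
qed


context
  fixes p q :: "'a::star_ring"
  assumes pp: "p * p = p" and qq: "q * q = q" and sp: "star p = p" and sq: "star q = q"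
begin

lemma pp2: "p * (p * z) = p * z" using pp by (simp add: mult.assoc[symmetric])
lemma qq2: "q * (q * z) = q * z" using qq by (simp add: mult.assoc[symmetric])

lemmas id_simps = algebra_simps pp pp2 qq qq2

lemma i_sr: "(p+q)*(p+q-1) = (p+q-1)*(p+q)" by (simp add: id_simps)
lemma i_t: "p*q+q*p = (p+q)*(p+q-1)" by (simp add: id_simps)
lemma i_tt1: "(p*q+q*p)*(p*q+q*p) = (p+q)*(p+q)*((p+q-1)*(p+q-1))" by (simp add: id_simps)
lemma i_tt2: "(p*q+q*p)*(p*q+q*p) = (p+q-1)*(p+q-1)*((p+q)*(p+q))" by (simp add: id_simps)
lemma i_ss: "(p+q)*(p+q) - (p*q+q*p) = p+q" by (simp add: id_simps)
lemma i_rr: "(p*q+q*p) - (p+q-1)*(p+q-1) = p+q-1" by (simp add: id_simps)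
lemma i_w: "p*q*p = p*((p+q-1)*(p+q-1))" by (simp add: id_simps)
lemma i_Rp: "(p+q-1)*(p+q-1)*p = p*q*p" by (simp add: id_simps)
lemma i_wrr: "p*((p+q-1)*(p+q-1))*(p*((p+q-1)*(p+q-1))) = p*((p+q-1)*(p+q-1)*((p+q-1)*(p+q-1)))" by (simp add: id_simps)
lemma i_R1p: "(p+q-1)*(p+q-1)*(1-p) = (1-p)*(1-q)*(1-p)" by (simp add: id_simps)
lemma i_1pR: "(1-p)*((p+q-1)*(p+q-1)) = (1-p)*(1-q)*(1-p)" by (simp add: id_simps)
lemma i_R1pq: "(p+q-1)*(p+q-1)*(1-p)*q = (1-p)*q*p*q" by (simp add: id_simps)
lemma i_q1pR: "q*(1-p)*((p+q-1)*(p+q-1)) = q*p*q*(1-p)" by (simp add: id_simps)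
lemma i_wb: "(1-p)*(1-q)*(1-p)*((1-p)*(1-q)*(1-p)) + (1-p)*q*p*q*(1-p) = (1-p)*(1-q)*(1-p)" by (simp add: id_simps)
lemma i_Rsplit: "(p+q-1)*(p+q-1) = p*q*p + (1-p)*(1-q)*(1-p)" by (simp add: id_simps)


lemma A1: assumes "C (p*q+q*p)" shows "C (p+q)"
proof -
  obtain x where x: "p*q+q*p = (p*q+q*p)*(p*q+q*p)*x" using assms unfolding C_def by blast
  have "(p+q)*(p+q)*(1 - (p+q-1)*(p+q-1)*x) = (p+q)*(p+q) - (p+q)*(p+q)*((p+q-1)*(p+q-1))*x"
    by (simp add: algebra_simps)
  also have "\<dots> = (p+q)*(p+q) - (p*q+q*p)" using x i_tt1 by simp
  also have "\<dots> = p+q" by (rule i_ss)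
  finally show ?thesis unfolding C_def by metis
qed

lemma A2: assumes "C (p*q+q*p)" shows "C (p+q-1)"
proof -
  obtain x where x: "p*q+q*p = (p*q+q*p)*(p*q+q*p)*x" using assms unfolding C_def by blast
  have "(p+q-1)*(p+q-1)*((p+q)*(p+q)*x - 1) = (p+q-1)*(p+q-1)*((p+q)*(p+q))*x - (p+q-1)*(p+q-1)"
    by (simp add: algebra_simps)
  also have "\<dots> = (p*q+q*p) - (p+q-1)*(p+q-1)" using x i_tt2 by simp
  also have "\<dots> = p+q-1" by (rule i_rr)
  finally show ?thesis unfolding C_def by metis
qed

lemma B1: assumes "C (p+q-1)" shows "C (p*q*p)"
proof -
  define r where "r = p+q-1"
  obtain z where z: "r = r*r*z" using assms unfolding C_def r_def by blast
  have z': "r*(r*z) = r" using z by (simp add: mult.assoc)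
  have rr: "r*r*(r*r*(z*z)) = r*r"
  proof -
    have "r*r*(r*r*(z*z)) = r*(r*(r*(r*z)*z))" by (simp add: mult.assoc)
    also have "\<dots> = r*r" by (simp add: z')
    finally show ?thesis .
  qed
  have "p*q*p*(p*q*p)*(z*z) = p*(r*r*(r*r*(z*z)))"
    using i_w i_wrr unfolding r_def[symmetric] by (simp add: mult.assoc)
  also have "\<dots> = p*q*p" using rr i_w r_def by simp
  finally show ?thesis unfolding C_def by metis
qed

lemma A3: assumes "C (p+q)" "C (p+q-1)" shows "C (p*q+q*p)"
proof -
  define s where "s = p+q"
  define r where "r = p+q-1"
  have hs: "star s = s" by (simp add: s_def star_simps sp sq)
  obtain x where "s = s*s*x" using assms(1) unfolding C_def s_def by blast
  from herm_GI[OF hs this] obtain g where g: "s * g = g * s" "s * g * s = s" by blast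
  have gr: "g * r = r * g" using g(1) by (simp add: r_def s_def[symmetric] algebra_simps)
  have ssg: "s * s * g = s"
  proof -
    have "s * s * g = s * (g * s)" using g(1) by (simp add: mult.assoc)
    thus ?thesis using g(2) by (simp add: mult.assoc)
  qed
  obtain z where z: "r = r*r*z" using assms(2) unfolding C_def r_def by blast
  have t: "p*q+q*p = s*r" using i_t s_def r_def by simp
  have tt: "(p*q+q*p)*(p*q+q*p) = s*s*(r*r)" using i_tt1 s_def r_def by simp
  have "s*r = s*s*g*(r*r*z)" using ssg z by simp
  also have "\<dots> = s*s*(g*r)*(r*z)" by (simp add: mult.assoc)
  also have "\<dots> = s*s*r*((g*r)*z)"
  proof -
    have gr2: "g*(r*y) = r*(g*y)" for y by (simp add: mult.assoc[symmetric] gr)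
    show ?thesis by (simp add: mult.assoc gr2)
  qed
  also have "\<dots> = s*s*(r*r)*(g*z)"
  proof -
    have gr2: "g*(r*y) = r*(g*y)" for y by (simp add: mult.assoc[symmetric] gr)
    show ?thesis by (simp add: mult.assoc gr2)
  qed
  finally show ?thesis unfolding C_def using t tt by metis
qed


lemma i_RzR: "(p+q-1)*(p+q-1)*(a+b+c)*((p+q-1)*(p+q-1)) = (p+q-1)*(p+q-1)*a*((p+q-1)*(p+q-1)) + (p+q-1)*(p+q-1)*b*((p+q-1)*(p+q-1)) + (p+q-1)*(p+q-1)*c*((p+q-1)*(p+q-1))"
  by (simp add: algebra_simps)
lemma i_T2: "(p+q-1)*(p+q-1)*(1-p)*((p+q-1)*(p+q-1)) = (1-p)*(1-q)*(1-p)*((1-p)*(1-q)*(1-p))"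
  by (simp add: id_simps)

lemma B2: assumes red: "star_reducing TYPE('a)" and cw: "C (p*q*p)" shows "C (p+q-1)"
proof -
  define w where "w = p*q*p"
  have hw: "star w = w" by (simp add: w_def star_simps sp sq mult.assoc)
  obtain x where "w = w*w*x" using cw unfolding C_def w_def by blast
  from herm_GI[OF hw this] obtain v where wv: "w*v = v*w" "w*v*w = w" "v*w*v = v" "star v = v" "star (w*v) = w*v"
    by blast
  have pw: "p*w = w" by (simp add: w_def pp2 mult.assoc)
  have wp: "w*p = w" by (simp add: w_def mult.assoc pp)
  have vv: "v = w*v*v" using wv(1) wv(3) by simp
  have pv: "p*v = v"
  proof -
    have "p*v = p*w*v*v" using vv by (simp add: mult.assoc)
    also have "\<dots> = v" using pw vv by simp
    finally show ?thesis .
  qed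
  have vv': "v = v*v*w" using wv(1) wv(3) by (simp add: mult.assoc)
  have vp: "v*p = v"
  proof -
    have "v*p = v*v*(w*p)" using vv' by (metis mult.assoc)
    also have "\<dots> = v" using wp vv' by simp
    finally show ?thesis .
  qed
  define e where "e = w*v"
  have se: "star e = e" using wv(5) e_def by simp
  have ep: "e*p = e" by (simp add: e_def mult.assoc vp)
  have pe: "p*e = e" by (simp add: e_def mult.assoc[symmetric] pw)
  have ew: "e*w = w" using wv(2) e_def by simp
  have ee: "e*e = e"
  proof -
    have "e*e = (w*v*w)*v" by (simp add: e_def mult.assoc)
    thus ?thesis using wv(2) e_def by simp
  qed
  have pe1: "(p - e)*p = p - e" by (simp add: algebra_simps pp ep)
  have Dp: "(p-e)*q*p = 0"
  proof -
    have "(p-e)*q*p = ((p-e)*p)*(q*p)" using pe1 by (simp add: mult.assoc)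
    also have "\<dots> = (p-e)*w" by (simp add: mult.assoc w_def)
    also have "\<dots> = 0" by (simp add: algebra_simps pw ew)
    finally show ?thesis .
  qed
  have De: "(p-e)*q*e = 0"
  proof -
    have "(p-e)*q*e = ((p-e)*q*p)*e" using pe by (simp add: mult.assoc)
    thus ?thesis using Dp by simp
  qed
  have "((p-e)*q) * star ((p-e)*q) = 0"
  proof -
    have "((p-e)*q) * star ((p-e)*q) = (p-e)*(q*q)*(p-e)" by (simp add: star_simps sp sq se mult.assoc)
    also have "\<dots> = (p-e)*q*p - (p-e)*q*e" by (simp add: qq algebra_simps)
    finally show ?thesis using Dp De by simp
  qed
  hence "(p-e)*q = 0" using reduce0[OF red] by blast
  hence eq: "e*q = p*q" by (simp add: algebra_simps)
  define R where "R = (p+q-1)*(p+q-1)"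
  define z where "z = v + (1-p) + (1-p)*q*v*v*q*(1-p)"
  have Rv: "R*v = w*v"
  proof -
    have "R*v = (R*p)*v" using pv by (simp add: mult.assoc)
    also have "R*p = w" unfolding R_def w_def by (rule i_Rp)
    finally show ?thesis .
  qed
  have vR: "v*R = v*w"
  proof -
    have "v*R = v*(p*R)" using vp by (metis mult.assoc)
    also have "p*R = w" unfolding R_def w_def by (rule i_w[symmetric])
    finally show ?thesis .
  qed
  have T1: "R*v*R = w"
  proof -
    have "R*v*R = w*(v*R)" using Rv by (simp add: mult.assoc)
    also have "\<dots> = w*v*w" using vR by (simp add: mult.assoc)
    finally show ?thesis using wv(2) by simp
  qed
  have T2: "R*(1-p)*R = (1-p)*(1-q)*(1-p)*((1-p)*(1-q)*(1-p))"
    unfolding R_def by (rule i_T2)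
  have pqvvqp: "p*q*v*v*q*p = e"
  proof -
    have a: "p*q*v = w*v" using pv by (metis w_def mult.assoc)
    have b: "v*q*p = v*w" using vp by (metis w_def mult.assoc)
    have "p*q*v*v*q*p = (p*q*v)*(v*q*p)" by (simp add: mult.assoc)
    also have "\<dots> = e*e" using a b wv(1) e_def by simp
    finally show ?thesis using ee by simp
  qed
  have T3: "R*((1-p)*q*v*v*q*(1-p))*R = (1-p)*q*p*q*(1-p)"
  proof -
    have R1: "R*(1-p)*q = (1-p)*q*p*q" unfolding R_def by (rule i_R1pq)
    have R2: "q*(1-p)*R = q*p*q*(1-p)" unfolding R_def by (rule i_q1pR)
    have "R*((1-p)*q*v*v*q*(1-p))*R = (R*(1-p)*q)*(v*v)*(q*(1-p)*R)" by (simp add: mult.assoc)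
    also have "\<dots> = ((1-p)*q*p*q)*(v*v)*(q*p*q*(1-p))" using R1 R2 by simp
    also have "\<dots> = (1-p)*q*(p*q*v*v*q*p)*q*(1-p)" by (simp add: mult.assoc)
    also have "\<dots> = (1-p)*q*(e*q)*(1-p)" using pqvvqp by (simp add: mult.assoc)
    also have "\<dots> = (1-p)*q*p*q*(1-p)" using eq by (simp add: mult.assoc)
    finally show ?thesis .
  qed
  have RzR: "R*z*R = R"
  proof -
    have "R*z*R = R*v*R + R*(1-p)*R + R*((1-p)*q*v*v*q*(1-p))*R"
      unfolding z_def R_def by (rule i_RzR)
    also have "\<dots> = w + (1-p)*(1-q)*(1-p)*((1-p)*(1-q)*(1-p)) + (1-p)*q*p*q*(1-p)"
      using T1 T2 T3 by simp
    also have "\<dots> = w + (1-p)*(1-q)*(1-p)" using i_wb by (simp add: add.assoc)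
    also have "\<dots> = R" unfolding R_def w_def by (rule i_Rsplit[symmetric])
    finally show ?thesis .
  qed
  define r where "r = p+q-1"
  have sr: "star r = r" by (simp add: r_def star_simps sp sq)
  have rz: "r*r*z*(r*r) = r*r" using RzR unfolding R_def r_def .
  define d where "d = r - r*z*r*r"
  have rd: "r*d = 0"
  proof -
    have "r*d = r*r - r*r*z*(r*r)" by (simp add: d_def algebra_simps)
    thus ?thesis using rz by simp
  qed
  have "star d * star (star d) = 0"
  proof -
    have "star d * d = star d * r - (star d * r)*(z*r*r)" by (simp add: d_def algebra_simps)
    also have "star d * r = star (r*d)" by (simp add: star_mult sr)
    finally show ?thesis using rd by (simp add: star_star star_zero)
  qed
  hence "star d = 0" using reduce0[OF red] by blast
  hence "d = 0" by (metis star_star star_zero)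
  hence "r = r*z*r*r" by (simp add: d_def)
  hence "star r = star (r*z*r*r)" by simp
  hence "r = r*r*(star z * r)" by (simp add: star_simps sr mult.assoc)
  thus ?thesis unfolding C_def r_def by blast
qed

end


theorem theorem2p14:
  fixes p q :: "'a::star_ring"
  assumes "star_reducing TYPE('a)"
    and "projection p" and "projection q"
  shows "MP_invertible (p * q + q * p) \<longleftrightarrow> (MP_invertible (p + q) \<and> MP_invertible (p * q))"
proof -
  have pp: "p*p = p" and sp: "star p = p" using assms(2) unfolding projection_def by auto
  have qq: "q*q = q" and sq: "star q = q" using assms(3) unfolding projection_def by auto
  have ht: "star (p*q+q*p) = p*q+q*p" by (simp add: star_simps sp sq add.commute)
  have hs: "star (p+q) = p+q" by (simp add: star_simps sp sq)
  have e1: "MP_invertible (p*q+q*p) \<longleftrightarrow> C (p*q+q*p)" by (rule herm_MP_iff[OF ht])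
  have e2: "MP_invertible (p+q) \<longleftrightarrow> C (p+q)" by (rule herm_MP_iff[OF hs])
  have pqs: "p*q*star (p*q) = p*q*p" by (simp add: star_simps sp sq mult.assoc qq2[OF pp qq sp sq])
  have e3: "MP_invertible (p*q) \<longleftrightarrow> C (p*q*p)"
    using MP_imp_C[of "p*q"] C_imp_MP[OF assms(1), of "p*q"] pqs by auto
  show ?thesis
    unfolding e1 e2 e3
    using A1[OF pp qq sp sq] A2[OF pp qq sp sq] A3[OF pp qq sp sq] B1[OF pp qq sp sq] B2[OF pp qq sp sq assms(1)]
    by blast
qed

end
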